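(* Assume $\mathbb{E}\bigl(h(\theta)^2\bigr)<\infty$. Then for $f_S$-almost all $s^*\in\mathbb{R}^q$, $$\lim_{\delta\downarrow0} n\,\mathrm{Var}\bigl(Y^{(\delta)}_n\bigr)=\mathrm{Var}\bigl(h(\theta)\mid S=s^*\bigr),$$ uniformly in $n\in\mathbb{N}$.
   Context: Let $p,q\ge1$, $h\colon\mathbb{R}^p\to\mathbb{R}$ measurable. Let $(\theta,S)$ be a random vector in $\mathbb{R}^p\times\mathbb{R}^q$ with joint Lebesgue density $f_{S,\theta}(s,t)$, marginal $f_S(s)=\int f_{S,\theta}(s,t)\,dt$, and conditional density $f_{\theta|S}(t\mid s)=f_{S,\theta}(s,t)/f_S(s)$ if $f_S(s)>0$, $0$ otherwise; conditional expectations/variances given $S=s$ use this density. Fix a symmetric positive definite $q\times q$ matrix $A$ and let $\|s\|_A^2=s^\top A^{-1}s$. ABC algorithm: given $s^*$, $\delta>0$, $n\in\mathbb{N}$, repeatedly draw independent pairs $(\theta,S)$ from the joint distribution, accepting $\theta$ whenever $\|S-s^*\|_A\le\delta$, until $n$ values $\theta^{(\delta)}_1,\dots,\theta^{(\delta)}_n$ are accepted (i.i.d. with the law of $\theta$ given $\|S-s^*\|_A\le\delta$); $Y^{(\delta)}_n=\frac1n\sum_{j=1}^n h(\theta^{(\delta)}_j)$. *)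

theory Defs
  imports "HOL-Probability.Probability"
begin

definition var_of :: "'a measure \<Rightarrow> ('a \<Rightarrow> real) \<Rightarrow> real" where
  "var_of M X = (\<integral>x. (X x - (\<integral>y. X y \<partial>M))\<^sup>2 \<partial>M)"

definition A_norm :: "real^'q^'q \<Rightarrow> real^'q \<Rightarrow> real" where
  "A_norm A s = sqrt (s \<bullet> (matrix_inv A *v s))"

text \<open>Joint law of \<open>(\<theta>, S)\<close> given the joint density \<open>f_{S,\<theta>}(s,t)\<close>.\<close>
definition joint_law :: "(real^'q \<Rightarrow> real^'p \<Rightarrow> real) \<Rightarrow> ((real^'p) \<times> (real^'q)) measure" where
  "joint_law f = density lborel (\<lambda>(t, s). ennreal (f s t))"

definition marg_S :: "(real^'q \<Rightarrow> real^'p \<Rightarrow> real) \<Rightarrow> real^'q \<Rightarrow> real" where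
  "marg_S f s = (\<integral>t. f s t \<partial>lborel)"

definition cond_dens :: "(real^'q \<Rightarrow> real^'p \<Rightarrow> real) \<Rightarrow> real^'q \<Rightarrow> real^'p \<Rightarrow> real" where
  "cond_dens f s t = (if marg_S f s > 0 then f s t / marg_S f s else 0)"

definition cond_var :: "(real^'q \<Rightarrow> real^'p \<Rightarrow> real) \<Rightarrow> (real^'p \<Rightarrow> real) \<Rightarrow> real^'q \<Rightarrow> real" where
  "cond_var f h s = var_of (density lborel (\<lambda>t. ennreal (cond_dens f s t))) h"

text \<open>Law of one accepted ABC draw: law of \<theta> given \<parallel>S - s*\<parallel>_A \<le> \<delta>.\<close>
definition abc_accept_law ::
  "(real^'q \<Rightarrow> real^'p \<Rightarrow> real) \<Rightarrow> real^'q^'q \<Rightarrow> real^'q \<Rightarrow> real \<Rightarrow> (real^'p) measure" where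
  "abc_accept_law f A sstar \<delta> =
     distr (uniform_measure (joint_law f) {(t, s). A_norm A (s - sstar) \<le> \<delta>}) borel fst"

definition abc_var_Y ::
  "(real^'q \<Rightarrow> real^'p \<Rightarrow> real) \<Rightarrow> real^'q^'q \<Rightarrow> (real^'p \<Rightarrow> real) \<Rightarrow> real^'q \<Rightarrow> real \<Rightarrow> nat \<Rightarrow> real" where
  "abc_var_Y f A h sstar \<delta> n =
     var_of (PiM {..<n} (\<lambda>_. abc_accept_law f A sstar \<delta>))
            (\<lambda>\<omega>. (1 / real n) * (\<Sum>j<n. h (\<omega> j)))"

end

theory Submission
  imports Defs
begin



lemma appr_indicator:
  fixes A :: "'a::euclidean_space set"
  assumes A: "A \<in> sets lborel" "emeasure lborel A < \<infinity>" and e: "e > 0"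
  shows "\<exists>\<phi>. continuous_on UNIV \<phi> \<and> integrable lborel \<phi> \<and>
      (\<integral>\<^sup>+x. ennreal \<bar>indicator A x - \<phi> x\<bar> \<partial>lborel) < ennreal e"
proof -
  have AL: "A \<in> sets lebesgue" using A by (simp add: sets_completionI_sets)
  have e2: "e/2 > 0" using e by simp
  obtain U where U: "open U" "A \<subseteq> U" "emeasure lebesgue (U - A) < ennreal (e/2)"
    by (rule sets_lebesgue_outer_open[OF AL e2]) 
  obtain T where T: "closed T" "T \<subseteq> A" "emeasure lebesgue (A - T) < ennreal (e/2)"
    by (rule sets_lebesgue_inner_closed[OF AL e2])
  have dj: "T \<inter> - U = {}" using T U by blast
  obtain \<phi> :: "'a \<Rightarrow> real" where phi: "continuous_on UNIV \<phi>" "\<And>x. \<phi> x \<in> closed_segment 1 0"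
     "\<And>x. x \<in> T \<Longrightarrow> \<phi> x = 1" "\<And>x. x \<in> -U \<Longrightarrow> \<phi> x = 0"
    by (rule Urysohn[OF T(1) _ dj]) (use U(1) in auto)
  have phi01: "0 \<le> \<phi> x \<and> \<phi> x \<le> 1" for x
    using phi(2)[of x] by (auto simp: closed_segment_eq_real_ivl)
  have Ub: "U \<in> sets borel" "T \<in> sets borel" using U T by auto
  have UA: "U - A \<in> sets lborel" "A - T \<in> sets lborel" using Ub A by auto
  have mUA: "emeasure lborel (U - A) < ennreal (e/2)" "emeasure lborel (A - T) < ennreal (e/2)"
    using U(3) T(3) UA by simp_all
  have "emeasure lborel U \<le> emeasure lborel (A \<union> (U - A))"
    by (intro emeasure_mono) (use Ub A in auto)
  also have "\<dots> \<le> emeasure lborel A + emeasure lborel (U - A)"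
    using A UA by (intro emeasure_subadditive) auto
  also have "\<dots> < \<infinity>" using A mUA(1) less_trans[OF mUA(1) ennreal_less_top] by (simp add: less_top[symmetric])
  finally have Ufin: "emeasure lborel U < \<infinity>" .
  have meas: "\<phi> \<in> borel_measurable lborel" using phi(1) borel_measurable_continuous_onI by simp
  have int: "integrable lborel \<phi>"
  proof (rule Bochner_Integration.integrable_bound)
    show "integrable lborel (indicator U :: 'a \<Rightarrow> real)"
      using Ufin Ub by (simp add: less_top)
    show "AE x in lborel. norm (\<phi> x) \<le> norm (indicator U x :: real)"
      using phi01 phi(4) by (auto simp: indicator_def)
  qed (use meas in auto)
  have "(\<integral>\<^sup>+x. ennreal \<bar>indicator A x - \<phi> x\<bar> \<partial>lborel) \<le> (\<integral>\<^sup>+x. indicator (U - T) x \<partial>lborel)"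
    using phi01 phi(3,4) T U by (intro nn_integral_mono) (auto simp: indicator_def)
  also have "\<dots> = emeasure lborel (U - T)" using Ub by simp
  also have "\<dots> \<le> emeasure lborel ((U - A) \<union> (A - T))" by (intro emeasure_mono) (use UA in auto)
  also have "\<dots> \<le> emeasure lborel (U - A) + emeasure lborel (A - T)"
    using UA by (intro emeasure_subadditive) auto
  also have "\<dots> < ennreal (e/2) + ennreal (e/2)"
    using mUA by (intro add_strict_mono) auto
  also have "\<dots> = ennreal e" using e by (simp flip: ennreal_plus)
  finally show ?thesis using phi(1) int by blast
qed
lemma appr_integrable:
  fixes u :: "'a::euclidean_space \<Rightarrow> real"
  assumes "integrable lborel u" and "\<eta> > 0"
  shows "\<exists>\<phi>. continuous_on UNIV \<phi> \<and> integrable lborel \<phi> \<and>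
      (\<integral>\<^sup>+x. ennreal \<bar>u x - \<phi> x\<bar> \<partial>lborel) < ennreal \<eta>"
  using assms(1) assms(2)
proof (induction arbitrary: \<eta> rule: integrable_induct)
  case (base A c)
  define e where "e = \<eta> / (\<bar>c\<bar> + 1)"
  have e: "e > 0" using base by (simp add: e_def)
  obtain \<phi> where phi: "continuous_on UNIV \<phi>" "integrable lborel \<phi>"
      "(\<integral>\<^sup>+x. ennreal \<bar>indicator A x - \<phi> x\<bar> \<partial>lborel) < ennreal e"
    using appr_indicator[OF base(1) base(2) e] by blast
  have "(\<integral>\<^sup>+x. ennreal \<bar>indicator A x *\<^sub>R c - c * \<phi> x\<bar> \<partial>lborel)
      = (\<integral>\<^sup>+x. ennreal \<bar>c\<bar> * ennreal \<bar>indicator A x - \<phi> x\<bar> \<partial>lborel)"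
    by (intro nn_integral_cong) (simp add: ennreal_mult[symmetric] abs_mult[symmetric] algebra_simps)
  also have "\<dots> = ennreal \<bar>c\<bar> * (\<integral>\<^sup>+x. ennreal \<bar>indicator A x - \<phi> x\<bar> \<partial>lborel)"
  proof (intro nn_integral_cmult)
    have [measurable]: "\<phi> \<in> borel_measurable lborel"
      using phi(1) by (auto intro!: borel_measurable_continuous_onI)
    note base(1)[measurable]
    show "(\<lambda>x. ennreal \<bar>indicator A x - \<phi> x\<bar>) \<in> borel_measurable lborel" by measurable
  qed
  also have "\<dots> \<le> ennreal \<bar>c\<bar> * ennreal e"
    using phi(3) by (intro mult_left_mono) auto
  also have "\<dots> = ennreal (\<bar>c\<bar> * e)" by (rule ennreal_mult[symmetric]) (use e in auto)
  also have "\<dots> < ennreal \<eta>"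
  proof -
    have "\<bar>c\<bar> * e < \<eta>" using base(3) by (simp add: e_def field_simps)
    then show ?thesis using base(3) by (simp add: ennreal_lessI)
  qed
  finally show ?case using phi(1,2)
    by (intro exI[of _ "\<lambda>x. c * \<phi> x"]) (auto intro: continuous_intros)
next
  case (add f g)
  have h: "\<eta>/2 > 0" using add by simp
  obtain \<phi> where phi: "continuous_on UNIV \<phi>" "integrable lborel \<phi>"
      "(\<integral>\<^sup>+x. ennreal \<bar>f x - \<phi> x\<bar> \<partial>lborel) < ennreal (\<eta>/2)"
    using add(3)[OF h] by blast
  obtain \<psi> where psi: "continuous_on UNIV \<psi>" "integrable lborel \<psi>"
      "(\<integral>\<^sup>+x. ennreal \<bar>g x - \<psi> x\<bar> \<partial>lborel) < ennreal (\<eta>/2)"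
    using add(4)[OF h] by blast
  have mf: "f \<in> borel_measurable lborel" "g \<in> borel_measurable lborel" using add by auto
  have mp: "\<phi> \<in> borel_measurable lborel" "\<psi> \<in> borel_measurable lborel"
    using phi(1) psi(1) by (auto intro!: borel_measurable_continuous_onI)
  have "(\<integral>\<^sup>+x. ennreal \<bar>(f x + g x) - (\<phi> x + \<psi> x)\<bar> \<partial>lborel)
      \<le> (\<integral>\<^sup>+x. ennreal \<bar>f x - \<phi> x\<bar> + ennreal \<bar>g x - \<psi> x\<bar> \<partial>lborel)"
    by (intro nn_integral_mono) (simp add: ennreal_plus[symmetric] del: ennreal_plus)
  also have "\<dots> = (\<integral>\<^sup>+x. ennreal \<bar>f x - \<phi> x\<bar> \<partial>lborel) + (\<integral>\<^sup>+x. ennreal \<bar>g x - \<psi> x\<bar> \<partial>lborel)"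
    using mf mp by (intro nn_integral_add) auto
  also have "\<dots> < ennreal (\<eta>/2) + ennreal (\<eta>/2)"
    using phi(3) psi(3) by (rule add_strict_mono)
  also have "\<dots> = ennreal \<eta>" using add by (simp flip: ennreal_plus)
  finally show ?case using phi psi
    by (intro exI[of _ "\<lambda>x. \<phi> x + \<psi> x"]) (auto intro: continuous_intros)
next
  case (lim f s)
  have h: "\<eta>/2 > 0" using lim by simp
  have ms: "\<And>i. s i \<in> borel_measurable lborel" using lim by auto
  have mf: "f \<in> borel_measurable lborel" using lim by auto
  have "(\<lambda>i. (\<integral>\<^sup>+x. norm (f x - s i x) \<partial>lborel)) \<longlonglongrightarrow> 0"
  proof (rule nn_integral_dominated_convergence_norm[where w="\<lambda>x. 2 * norm (f x)"])
    show "(\<integral>\<^sup>+x. ennreal (2 * norm (f x)) \<partial>lborel) < \<infinity>"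
      using lim(4) by (auto simp: integrable_iff_bounded ennreal_mult nn_integral_cmult
           ennreal_mult_less_top)
  qed (use ms mf lim(2,3) in auto)
  then have "eventually (\<lambda>i. (\<integral>\<^sup>+x. norm (f x - s i x) \<partial>lborel) < ennreal (\<eta>/2)) sequentially"
    using h by (intro order_tendstoD) auto
  then obtain i where i: "(\<integral>\<^sup>+x. norm (f x - s i x) \<partial>lborel) < ennreal (\<eta>/2)"
    by (auto dest: eventually_happens)
  obtain \<phi> where phi: "continuous_on UNIV \<phi>" "integrable lborel \<phi>"
      "(\<integral>\<^sup>+x. ennreal \<bar>s i x - \<phi> x\<bar> \<partial>lborel) < ennreal (\<eta>/2)"
    using lim(5)[OF h] by blast
  have mp: "\<phi> \<in> borel_measurable lborel"
    using phi(1) by (auto intro!: borel_measurable_continuous_onI)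
  have "(\<integral>\<^sup>+x. ennreal \<bar>f x - \<phi> x\<bar> \<partial>lborel)
      \<le> (\<integral>\<^sup>+x. ennreal \<bar>f x - s i x\<bar> + ennreal \<bar>s i x - \<phi> x\<bar> \<partial>lborel)"
    by (intro nn_integral_mono) (simp add: ennreal_plus[symmetric] del: ennreal_plus)
  also have "\<dots> = (\<integral>\<^sup>+x. ennreal \<bar>f x - s i x\<bar> \<partial>lborel) + (\<integral>\<^sup>+x. ennreal \<bar>s i x - \<phi> x\<bar> \<partial>lborel)"
    using mf ms mp by (intro nn_integral_add) auto
  also have "\<dots> < ennreal (\<eta>/2) + ennreal (\<eta>/2)"
    using i phi(3) by (intro add_strict_mono) auto
  also have "\<dots> = ennreal \<eta>" using lim by (simp flip: ennreal_plus)
  finally show ?case using phi by blast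
qed


lemma emeasure_cball_scale:
  fixes x :: "'a::euclidean_space"
  assumes "r \<ge> 0" "c \<ge> 0"
  shows "emeasure lborel (cball x (c * r)) = ennreal (c ^ DIM('a)) * emeasure lborel (cball x r)"
  using assms by (simp add: emeasure_cball power_mult_distrib ennreal_mult[symmetric] mult_ac)

lemma maximal_ineq:
  fixes v :: "'a::euclidean_space \<Rightarrow> ennreal"
  assumes v[measurable]: "v \<in> borel_measurable borel" and \<alpha>: "\<alpha> > 0"
  shows "\<exists>W \<in> sets borel. {x. \<forall>d>0. \<exists>r. 0<r \<and> r<d \<and>
      ennreal \<alpha> * emeasure lborel (cball x r) < (\<integral>\<^sup>+y. v y * indicator (cball x r) y \<partial>lborel)} \<subseteq> W
      \<and> emeasure lborel W \<le> ennreal (5 ^ DIM('a) / \<alpha>) * (\<integral>\<^sup>+y. v y \<partial>lborel)"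
proof -
  define S where "S = {x. \<forall>d>0. \<exists>r. 0<r \<and> r<d \<and>
      ennreal \<alpha> * emeasure lborel (cball x r) < (\<integral>\<^sup>+y. v y * indicator (cball x r) y \<partial>lborel)}"
  define K where "K = {(x,r). x \<in> S \<and> 0 < r \<and> r \<le> 1 \<and>
      ennreal \<alpha> * emeasure lborel (cball x r) < (\<integral>\<^sup>+y. v y * indicator (cball x r) y \<partial>lborel)}"
  have cov: "S \<subseteq> (\<Union>i\<in>K. cball (fst i) (snd i))"
  proof
    fix x assume x: "x \<in> S"
    then obtain r where r: "0<r" "r<1" "ennreal \<alpha> * emeasure lborel (cball x r) < (\<integral>\<^sup>+y. v y * indicator (cball x r) y \<partial>lborel)"
    proof -
      from x have "\<exists>r>0. r<1 \<and> ennreal \<alpha> * emeasure lborel (cball x r) < (\<integral>\<^sup>+y. v y * indicator (cball x r) y \<partial>lborel)"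
        unfolding S_def by simp
      then show ?thesis using that by blast
    qed
    then have "(x,r) \<in> K" using x by (auto simp: K_def)
    then show "x \<in> (\<Union>i\<in>K. cball (fst i) (snd i))" using r by (intro UN_I[of "(x,r)"]) auto
  qed
  have Kr: "\<And>i. i \<in> K \<Longrightarrow> 0 < snd i \<and> snd i \<le> 1" by (auto simp: K_def)
  obtain C where C: "countable C" "C \<subseteq> K"
     "pairwise (\<lambda>i j. disjnt (cball (fst i) (snd i)) (cball (fst j) (snd j))) C"
     "S \<subseteq> (\<Union>i\<in>C. cball (fst i) (5 * snd i))"
    by (rule Vitali_covering_lemma_cballs[OF cov Kr]) blast
  define W where "W = (\<Union>i\<in>C. cball (fst i) (5 * snd i))"
  have Wb: "W \<in> sets borel" unfolding W_def using C(1) by (intro sets.countable_UN') auto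
  define B where "B i = cball (fst i) (snd i)" for i :: "'a \<times> real"
  define B5 where "B5 i = cball (fst i) (5 * snd i)" for i :: "'a \<times> real"
  have posr: "i \<in> C \<Longrightarrow> snd i > 0" for i using C(2) by (auto simp: K_def)
  have "emeasure lborel W = (\<integral>\<^sup>+x. indicator W x \<partial>lborel)" using Wb by simp
  also have "\<dots> \<le> (\<integral>\<^sup>+x. (\<integral>\<^sup>+i. indicator (B5 i) x \<partial>count_space C) \<partial>lborel)"
  proof (intro nn_integral_mono)
    fix x
    show "indicator W x \<le> (\<integral>\<^sup>+i. indicator (B5 i) x \<partial>count_space C)"
    proof (cases "x \<in> W")
      case True
      then obtain j where j: "j \<in> C" "x \<in> B5 j" unfolding W_def B5_def by auto
      have "(\<integral>\<^sup>+i. indicator (B5 i) x * indicator {j} i \<partial>count_space C) = indicator (B5 j) x * emeasure (count_space C) {j}"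
        using j by (intro nn_integral_indicator_singleton) auto
      also have "\<dots> = 1" using j by simp
      moreover have "(\<integral>\<^sup>+i. indicator (B5 i) x * indicator {j} i \<partial>count_space C) \<le> (\<integral>\<^sup>+i. indicator (B5 i) x \<partial>count_space C)"
        by (intro nn_integral_mono) (simp add: indicator_def)
      ultimately have "1 \<le> (\<integral>\<^sup>+i. indicator (B5 i) x \<partial>count_space C)" by simp
      then show ?thesis using True by simp
    qed (simp)
  qed
  also have "\<dots> = (\<integral>\<^sup>+i. (\<integral>\<^sup>+x. indicator (B5 i) x \<partial>lborel) \<partial>count_space C)"
    using C(1) by (intro nn_integral_count_space_nn_integral) (auto simp: B5_def intro!: borel_measurable_indicator)
  also have "\<dots> = (\<integral>\<^sup>+i. ennreal (5 ^ DIM('a)) * emeasure lborel (B i) \<partial>count_space C)"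
    by (intro nn_integral_cong) (auto simp: B5_def B_def emeasure_cball_scale posr less_imp_le)
  also have "\<dots> \<le> (\<integral>\<^sup>+i. ennreal (5 ^ DIM('a) / \<alpha>) * (\<integral>\<^sup>+y. v y * indicator (B i) y \<partial>lborel) \<partial>count_space C)"
  proof (intro nn_integral_mono)
    fix i assume "i \<in> space (count_space C)"
    then have "i \<in> K" using C(2) by auto
    then have lt: "ennreal \<alpha> * emeasure lborel (B i) < (\<integral>\<^sup>+y. v y * indicator (B i) y \<partial>lborel)"
      by (auto simp: K_def B_def)
    have "emeasure lborel (B i) = ennreal (1/\<alpha>) * (ennreal \<alpha> * emeasure lborel (B i))"
      using \<alpha> by (simp add: mult.assoc[symmetric] ennreal_mult[symmetric])
    also have "\<dots> \<le> ennreal (1/\<alpha>) * (\<integral>\<^sup>+y. v y * indicator (B i) y \<partial>lborel)"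
      using lt by (intro mult_left_mono) auto
    finally have "ennreal (5 ^ DIM('a)) * emeasure lborel (B i) \<le> ennreal (5 ^ DIM('a)) * (ennreal (1/\<alpha>) * (\<integral>\<^sup>+y. v y * indicator (B i) y \<partial>lborel))"
      by (intro mult_left_mono) auto
    also have "\<dots> = ennreal (5 ^ DIM('a) / \<alpha>) * (\<integral>\<^sup>+y. v y * indicator (B i) y \<partial>lborel)"
      using \<alpha> by (simp add: mult.assoc[symmetric] ennreal_mult[symmetric])
    finally show "ennreal (5 ^ DIM('a)) * emeasure lborel (B i) \<le> ennreal (5 ^ DIM('a) / \<alpha>) * (\<integral>\<^sup>+y. v y * indicator (B i) y \<partial>lborel)" .
  qed
  also have "\<dots> = ennreal (5 ^ DIM('a) / \<alpha>) * (\<integral>\<^sup>+i. (\<integral>\<^sup>+y. v y * indicator (B i) y \<partial>lborel) \<partial>count_space C)"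
    by (intro nn_integral_cmult) auto
  also have "(\<integral>\<^sup>+i. (\<integral>\<^sup>+y. v y * indicator (B i) y \<partial>lborel) \<partial>count_space C)
      = (\<integral>\<^sup>+i. emeasure (density lborel v) (B i) \<partial>count_space C)"
    by (intro nn_integral_cong) (auto simp: B_def emeasure_density)
  also have "\<dots> = emeasure (density lborel v) (\<Union>(B ` C))"
  proof (rule emeasure_UN_countable[symmetric])
    show "disjoint_family_on B C" using C(3)
      by (auto simp: disjoint_family_on_def pairwise_def disjnt_def B_def)
  qed (use C(1) in \<open>auto simp: B_def\<close>)
  also have "\<dots> \<le> emeasure (density lborel v) UNIV"
    by (intro emeasure_mono) auto
  also have "\<dots> = (\<integral>\<^sup>+y. v y \<partial>lborel)"
    by (simp add: emeasure_density)
  finally show ?thesis using Wb C(4) unfolding W_def S_def by (intro bexI[of _ W]) (auto simp: W_def mult_left_mono)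
qed


lemma ex_inv_Suc: "(x::real) > 0 \<Longrightarrow> \<exists>n. inverse (real (Suc n)) < x"
  using ex_inverse_of_nat_less[of x] by (metis gr0_implies_Suc)

definition LP :: "('a::euclidean_space \<Rightarrow> real) \<Rightarrow> 'a \<Rightarrow> bool" where
  "LP u x \<longleftrightarrow> (\<forall>\<epsilon>>0. \<exists>d>0. \<forall>r. 0<r \<and> r<d \<longrightarrow>
     (\<integral>\<^sup>+y. ennreal \<bar>u y - u x\<bar> * indicator (cball x r) y \<partial>lborel) \<le> ennreal \<epsilon> * emeasure lborel (cball x r))"

lemma LD_step:
  fixes u :: "'a::euclidean_space \<Rightarrow> real"
  assumes u: "integrable lborel u" and \<beta>: "\<beta> > 0" and e: "e > 0"
  shows "\<exists>W\<in>sets borel. {x. \<forall>d>0. \<exists>r. 0<r \<and> r<d \<and>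
       \<not> (\<integral>\<^sup>+y. ennreal \<bar>u y - u x\<bar> * indicator (cball x r) y \<partial>lborel) \<le> ennreal (3 * \<beta>) * emeasure lborel (cball x r)}
       \<subseteq> W \<and> emeasure lborel W \<le> ennreal e"
proof -
  define \<eta> where "\<eta> = e * \<beta> / (5 ^ DIM('a) + 1)"
  have \<eta>: "\<eta> > 0" unfolding \<eta>_def using e \<beta> by (intro divide_pos_pos mult_pos_pos) (auto intro: add_pos_nonneg)
  obtain \<phi> where phi: "continuous_on UNIV \<phi>" "integrable lborel \<phi>"
      "(\<integral>\<^sup>+x. ennreal \<bar>u x - \<phi> x\<bar> \<partial>lborel) < ennreal \<eta>"
    using appr_integrable[OF u \<eta>] by blast
  have [measurable]: "\<phi> \<in> borel_measurable borel" using phi(1) by (rule borel_measurable_continuous_onI)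
  have [measurable]: "u \<in> borel_measurable borel" using u by auto
  define v where "v x = ennreal \<bar>u x - \<phi> x\<bar>" for x
  have [measurable]: "v \<in> borel_measurable borel" unfolding v_def by measurable
  obtain W1 where W1: "W1 \<in> sets borel" "{x. \<forall>d>0. \<exists>r. 0<r \<and> r<d \<and>
      ennreal \<beta> * emeasure lborel (cball x r) < (\<integral>\<^sup>+y. v y * indicator (cball x r) y \<partial>lborel)} \<subseteq> W1"
      "emeasure lborel W1 \<le> ennreal (5 ^ DIM('a) / \<beta>) * (\<integral>\<^sup>+y. v y \<partial>lborel)"
    using maximal_ineq[of v \<beta>] \<beta> by auto
  define W2 where "W2 = {x. \<beta> \<le> \<bar>u x - \<phi> x\<bar>}"
  have W2b: "W2 \<in> sets borel" unfolding W2_def by measurable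
  have "emeasure lborel W2 = (\<integral>\<^sup>+x. indicator W2 x \<partial>lborel)" using W2b by simp
  also have "\<dots> \<le> (\<integral>\<^sup>+x. ennreal (1/\<beta>) * v x \<partial>lborel)"
  proof (intro nn_integral_mono)
    fix x show "indicator W2 x \<le> ennreal (1/\<beta>) * v x"
    proof (cases "x \<in> W2")
      case True
      then have "1 \<le> (1/\<beta>) * \<bar>u x - \<phi> x\<bar>" using \<beta> by (simp add: W2_def field_simps)
      then show ?thesis using True \<beta> by (simp add: v_def ennreal_mult[symmetric] ennreal_1[symmetric] del: ennreal_1)
    qed simp
  qed
  also have "\<dots> = ennreal (1/\<beta>) * (\<integral>\<^sup>+x. v x \<partial>lborel)" by (intro nn_integral_cmult) auto
  finally have mW2: "emeasure lborel W2 \<le> ennreal (1/\<beta>) * (\<integral>\<^sup>+x. v x \<partial>lborel)" .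
  have sub: "{x. \<forall>d>0. \<exists>r. 0<r \<and> r<d \<and>
       \<not> (\<integral>\<^sup>+y. ennreal \<bar>u y - u x\<bar> * indicator (cball x r) y \<partial>lborel) \<le> ennreal (3 * \<beta>) * emeasure lborel (cball x r)}
       \<subseteq> W1 \<union> W2"
  proof
    fix x assume x: "x \<in> {x. \<forall>d>0. \<exists>r. 0<r \<and> r<d \<and>
       \<not> (\<integral>\<^sup>+y. ennreal \<bar>u y - u x\<bar> * indicator (cball x r) y \<partial>lborel) \<le> ennreal (3 * \<beta>) * emeasure lborel (cball x r)}"
    show "x \<in> W1 \<union> W2"
    proof (cases "x \<in> W2")
      case False
      then have ux: "\<bar>u x - \<phi> x\<bar> < \<beta>" by (simp add: W2_def)
      have "isCont \<phi> x" using phi(1) by (simp add: continuous_on_eq_continuous_at)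
      then obtain d0 where d0: "d0 > 0" "\<And>y. dist y x < d0 \<Longrightarrow> dist (\<phi> y) (\<phi> x) < \<beta>"
        using \<beta> unfolding continuous_at_eps_delta by blast
      have "x \<in> {x. \<forall>d>0. \<exists>r. 0<r \<and> r<d \<and>
         ennreal \<beta> * emeasure lborel (cball x r) < (\<integral>\<^sup>+y. v y * indicator (cball x r) y \<partial>lborel)}"
      proof (clarsimp)
        fix d :: real assume d: "d > 0"
        from x have "\<exists>r. 0<r \<and> r< min d d0 \<and>
          \<not> (\<integral>\<^sup>+y. ennreal \<bar>u y - u x\<bar> * indicator (cball x r) y \<partial>lborel) \<le> ennreal (3 * \<beta>) * emeasure lborel (cball x r)"
          using d d0 by (simp only: mem_Collect_eq)
        then obtain r where r: "0 < r" "r < min d d0"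
          "\<not> (\<integral>\<^sup>+y. ennreal \<bar>u y - u x\<bar> * indicator (cball x r) y \<partial>lborel) \<le> ennreal (3 * \<beta>) * emeasure lborel (cball x r)"
          by blast
        have "ennreal \<beta> * emeasure lborel (cball x r) < (\<integral>\<^sup>+y. v y * indicator (cball x r) y \<partial>lborel)"
        proof (rule ccontr)
          assume "\<not> ?thesis"
          then have le: "(\<integral>\<^sup>+y. v y * indicator (cball x r) y \<partial>lborel) \<le> ennreal \<beta> * emeasure lborel (cball x r)"
            by simp
          have "(\<integral>\<^sup>+y. ennreal \<bar>u y - u x\<bar> * indicator (cball x r) y \<partial>lborel)
               \<le> (\<integral>\<^sup>+y. (v y + ennreal (2*\<beta>)) * indicator (cball x r) y \<partial>lborel)"
          proof (intro nn_integral_mono)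
            fix y show "ennreal \<bar>u y - u x\<bar> * indicator (cball x r) y \<le> (v y + ennreal (2*\<beta>)) * indicator (cball x r) y"
            proof (cases "y \<in> cball x r")
              case True
              then have "dist y x < d0" using r by (simp add: dist_commute)
              then have "\<bar>\<phi> y - \<phi> x\<bar> < \<beta>" using d0(2) by (simp add: dist_real_def)
              then have "\<bar>u y - u x\<bar> \<le> \<bar>u y - \<phi> y\<bar> + 2*\<beta>" using ux by linarith
              then show ?thesis using True \<beta> by (simp add: v_def ennreal_plus[symmetric] del: ennreal_plus)
            qed simp
          qed
          also have "\<dots> = (\<integral>\<^sup>+y. v y * indicator (cball x r) y \<partial>lborel) + ennreal (2*\<beta>) * emeasure lborel (cball x r)"
          proof -
            have [measurable]: "cball x r \<in> sets borel" by simp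
            have m1: "(\<lambda>y. v y * indicator (cball x r) y) \<in> borel_measurable lborel" by measurable
            have m2: "(\<lambda>y. ennreal (2*\<beta>) * indicator (cball x r) y) \<in> borel_measurable lborel" by measurable
            have "(\<integral>\<^sup>+y. (v y + ennreal (2*\<beta>)) * indicator (cball x r) y \<partial>lborel)
               = (\<integral>\<^sup>+y. v y * indicator (cball x r) y + ennreal (2*\<beta>) * indicator (cball x r) y \<partial>lborel)"
              by (simp add: distrib_right)
            also have "\<dots> = (\<integral>\<^sup>+y. v y * indicator (cball x r) y \<partial>lborel) + (\<integral>\<^sup>+y. ennreal (2*\<beta>) * indicator (cball x r) y \<partial>lborel)"
              using m1 m2 by (rule nn_integral_add)
            also have "(\<integral>\<^sup>+y. ennreal (2*\<beta>) * indicator (cball x r) y \<partial>lborel) = ennreal (2*\<beta>) * emeasure lborel (cball x r)"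
              by (rule nn_integral_cmult_indicator) simp
            finally show ?thesis .
          qed
          also have "\<dots> \<le> ennreal \<beta> * emeasure lborel (cball x r) + ennreal (2*\<beta>) * emeasure lborel (cball x r)"
            using le by (rule add_right_mono)
          also have "\<dots> = ennreal (3 * \<beta>) * emeasure lborel (cball x r)"
            using \<beta> by (simp add: distrib_right[symmetric] ennreal_plus[symmetric] del: ennreal_plus)
          finally show False using r(3) by simp
        qed
        then show "\<exists>r>0. r < d \<and> ennreal \<beta> * emeasure lborel (cball x r) < (\<integral>\<^sup>+y. v y * indicator (cball x r) y \<partial>lborel)"
          using r by (intro exI[of _ r]) auto
      qed
      then show ?thesis using W1(2) by blast
    qed simp
  qed
  have "emeasure lborel (W1 \<union> W2) \<le> emeasure lborel W1 + emeasure lborel W2"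
    using W1(1) W2b by (intro emeasure_subadditive) auto
  also have "\<dots> \<le> ennreal (5 ^ DIM('a) / \<beta>) * (\<integral>\<^sup>+y. v y \<partial>lborel) + ennreal (1/\<beta>) * (\<integral>\<^sup>+x. v x \<partial>lborel)"
    using W1(3) mW2 by (rule add_mono)
  also have "\<dots> = ennreal ((5 ^ DIM('a) + 1) / \<beta>) * (\<integral>\<^sup>+y. v y \<partial>lborel)"
    using \<beta> by (simp add: distrib_right[symmetric] ennreal_plus[symmetric] add_divide_distrib del: ennreal_plus)
  also have "\<dots> \<le> ennreal ((5 ^ DIM('a) + 1) / \<beta>) * ennreal \<eta>"
    using phi(3) by (intro mult_left_mono) (auto simp: v_def)
  also have "\<dots> = ennreal e"
  proof -
    have p: "(5::real) ^ DIM('a) + 1 > 0" by (simp add: add_pos_nonneg)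
    have gen: "(c / \<beta>) * (e * \<beta> / c) = e" if "c > 0" for c :: real using \<beta> that by (simp add: field_simps)
    have "((5 ^ DIM('a) + 1) / \<beta>) * \<eta> = e" unfolding \<eta>_def by (rule gen[OF p])
    moreover have "ennreal ((5 ^ DIM('a) + 1) / \<beta>) * ennreal \<eta> = ennreal (((5 ^ DIM('a) + 1) / \<beta>) * \<eta>)"
      using \<beta> p \<eta> by (intro ennreal_mult[symmetric]) auto
    ultimately show ?thesis by simp
  qed
  finally show ?thesis using sub W1(1) W2b by (intro bexI[of _ "W1 \<union> W2"]) auto
qed

theorem lebesgue_differentiation:
  fixes u :: "'a::euclidean_space \<Rightarrow> real"
  assumes u: "integrable lborel u"
  shows "AE x in lborel. LP u x"
proof -
  define N where "N k = {x. \<forall>d>0. \<exists>r. 0<r \<and> r<d \<and>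
       \<not> (\<integral>\<^sup>+y. ennreal \<bar>u y - u x\<bar> * indicator (cball x r) y \<partial>lborel) \<le> ennreal (3 * (1 / (3 * real (Suc k)))) * emeasure lborel (cball x r)}" for k
  have ex: "\<exists>W. W \<in> sets borel \<and> N k \<subseteq> W \<and> emeasure lborel W \<le> ennreal (1 / real (Suc j))" for k j
    using LD_step[OF u, of "1 / (3 * real (Suc k))" "1 / real (Suc j)"] unfolding N_def by auto
  define W where "W k j = (SOME W. W \<in> sets borel \<and> N k \<subseteq> W \<and> emeasure lborel W \<le> ennreal (1 / real (Suc j)))" for k j
  have W: "W k j \<in> sets borel \<and> N k \<subseteq> W k j \<and> emeasure lborel (W k j) \<le> ennreal (1 / real (Suc j))" for k j
    using someI_ex[OF ex[of k j]] by (simp add: W_def)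
  define Z where "Z k = (\<Inter>j. W k j)" for k
  have Zb: "Z k \<in> sets borel" for k using W by (auto simp: Z_def)
  have Z0: "emeasure lborel (Z k) = 0" for k
  proof -
    have le: "emeasure lborel (Z k) \<le> ennreal (1 / real (Suc j))" for j
    proof -
      have "emeasure lborel (Z k) \<le> emeasure lborel (W k j)"
        using W by (intro emeasure_mono) (auto simp: Z_def)
      then show ?thesis using W[of k j] order_trans by blast
    qed
    have fin: "emeasure lborel (Z k) < \<infinity>" using le[of 0] by (simp add: le_less_trans)
    then obtain m where m: "emeasure lborel (Z k) = ennreal m" "m \<ge> 0"
      using ennreal_cases less_top by (metis infinity_ennreal_def less_irrefl)
    have "m \<le> 0"
    proof (rule ccontr)
      assume "\<not> m \<le> 0"
      then obtain j where "inverse (real (Suc j)) < m" using ex_inv_Suc by fastforce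
      moreover have "m \<le> 1 / real (Suc j)" using le[of j] m by (simp add: ennreal_le_iff)
      ultimately show False by (simp add: field_simps)
    qed
    then show ?thesis using m by simp
  qed
  have sub: "{x \<in> space lborel. \<not> LP u x} \<subseteq> (\<Union>k. Z k)"
  proof
    fix x assume "x \<in> {x \<in> space lborel. \<not> LP u x}"
    then obtain \<epsilon> where \<epsilon>: "\<epsilon> > 0" and nlp: "\<And>d. d > 0 \<Longrightarrow> \<exists>r. 0<r \<and> r<d \<and>
        \<not> (\<integral>\<^sup>+y. ennreal \<bar>u y - u x\<bar> * indicator (cball x r) y \<partial>lborel) \<le> ennreal \<epsilon> * emeasure lborel (cball x r)"
      unfolding LP_def by (auto simp: not_le)
    obtain k where k: "inverse (real (Suc k)) < \<epsilon>" using ex_inv_Suc[OF \<epsilon>] by blast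
    have "x \<in> N k" unfolding N_def mem_Collect_eq
    proof (intro allI impI)
      fix d :: real assume "d > 0"
      then obtain r where r: "0<r" "r<d" "\<not> (\<integral>\<^sup>+y. ennreal \<bar>u y - u x\<bar> * indicator (cball x r) y \<partial>lborel) \<le> ennreal \<epsilon> * emeasure lborel (cball x r)"
        using nlp by blast
      have "ennreal (3 * (1 / (3 * real (Suc k)))) * emeasure lborel (cball x r) \<le> ennreal \<epsilon> * emeasure lborel (cball x r)"
        using k by (intro mult_right_mono ennreal_leI) (auto simp: field_simps)
      then show "\<exists>r. 0 < r \<and> r < d \<and> \<not> (\<integral>\<^sup>+y. ennreal \<bar>u y - u x\<bar> * indicator (cball x r) y \<partial>lborel) \<le> ennreal (3 * (1 / (3 * real (Suc k)))) * emeasure lborel (cball x r)"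
        using r by (meson order_trans)
    qed
    then show "x \<in> (\<Union>k. Z k)" using W by (auto simp: Z_def)
  qed
  show ?thesis
  proof (rule AE_I'[OF _ sub])
    show "(\<Union>k. Z k) \<in> null_sets lborel"
      using Zb Z0 by (intro null_sets_UN) (auto simp: null_sets_def)
  qed
qed


lemma avg_aux:
  fixes I m a e :: real
  assumes m: "m > 0" and le: "\<bar>I - a * m\<bar> \<le> e * m"
  shows "\<bar>I / m - a\<bar> \<le> e"
proof -
  have "I / m - a = (I - a * m) / m" using m by (simp add: field_simps)
  then have "\<bar>I / m - a\<bar> = \<bar>I - a * m\<bar> / m" using m by simp
  also have "\<dots> \<le> (e * m) / m" using le m by (intro divide_right_mono) auto
  also have "\<dots> = e" using m by simp
  finally show ?thesis .
qed

lemma LP_avg: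
  fixes u :: "'a::euclidean_space \<Rightarrow> real" and N :: "'a \<Rightarrow> real"
  assumes u: "integrable lborel u" and lp: "LP u x"
    and c: "c > 0" and Nb: "\<And>v. c * norm v \<le> N v \<and> N v \<le> C * norm v"
    and Eb: "\<And>r. {y. N (y - x) \<le> r} \<in> sets borel"
  shows "((\<lambda>r. (\<integral>y. indicator {y. N (y - x) \<le> r} y * u y \<partial>lborel) / measure lborel {y. N (y - x) \<le> r}) \<longlongrightarrow> u x) (at_right 0)"
proof -
  define E where "E r = {y. N (y - x) \<le> r}" for r
  define D where "D = DIM('a)"
  define V where "V = unit_ball_vol (real DIM('a))"
  have V: "V > 0" by (simp add: V_def)
  obtain b :: 'a where b: "b \<in> Basis" using nonempty_Basis by blast
  have cC: "c \<le> C" using Nb[of b] b by auto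
  then have C: "C > 0" using c by simp
  have sub1: "cball x (r/C) \<subseteq> E r" if "r > 0" for r
  proof
    fix y assume "y \<in> cball x (r/C)"
    then have "norm (y - x) \<le> r / C" by (simp add: dist_norm norm_minus_commute)
    then have "C * norm (y - x) \<le> r" using C by (simp add: field_simps)
    then show "y \<in> E r" using Nb[of "y - x"] by (simp add: E_def)
  qed
  have sub2: "E r \<subseteq> cball x (r/c)" for r
  proof
    fix y assume "y \<in> E r"
    then have "c * norm (y - x) \<le> r" using Nb[of "y - x"] by (simp add: E_def)
    then have "norm (y - x) \<le> r / c" using c by (simp add: field_simps)
    then show "y \<in> cball x (r/c)" by (simp add: dist_norm norm_minus_commute)
  qed
  have EB: "E r \<in> sets lborel" for r using Eb by (simp add: E_def)
  have emc: "emeasure lborel (cball x \<rho>) = ennreal (V * \<rho> ^ D)" if "\<rho> \<ge> 0" for \<rho>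
    using emeasure_cball[OF that, of x] by (simp add: V_def D_def)
  have Efin: "emeasure lborel (E r) < \<infinity>" for r
    using emeasure_mono[OF sub2 sets_lborel[THEN eqset_imp_iff, THEN iffD2, OF borel_closed[OF closed_cball]]] emeasure_lborel_cball_finite
    by (metis le_less_trans)
  have mE: "measure lborel (E r) \<ge> V * (r/C) ^ D" if "r > 0" for r
  proof -
    have "ennreal (V * (r/C) ^ D) = emeasure lborel (cball x (r/C))"
      using emc[of "r/C"] that C by simp
    also have "\<dots> \<le> emeasure lborel (E r)"
      using sub1[OF that] EB by (intro emeasure_mono) auto
    also have "\<dots> = ennreal (measure lborel (E r))"
      by (rule emeasure_eq_ennreal_measure) (use Efin[of r] in \<open>simp add: less_top\<close>)
    finally show ?thesis by (subst (asm) ennreal_le_iff[OF measure_nonneg])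
  qed
  have mEpos: "measure lborel (E r) > 0" if "r > 0" for r
    using mE[OF that] V C that by (smt (verit) zero_less_divide_iff zero_less_power mult_pos_pos)
  show ?thesis unfolding E_def[symmetric]
  proof (rule tendstoI)
    fix \<epsilon> :: real assume \<epsilon>: "\<epsilon> > 0"
    define K where "K = (C / c) ^ D"
    have K: "K > 0" using c C by (simp add: K_def)
    have "\<epsilon> / (2 * K) > 0" using \<epsilon> K by simp
    then obtain d where d: "d > 0" and dP: "\<And>\<rho>. 0 < \<rho> \<Longrightarrow> \<rho> < d \<Longrightarrow>
        (\<integral>\<^sup>+y. ennreal \<bar>u y - u x\<bar> * indicator (cball x \<rho>) y \<partial>lborel) \<le> ennreal (\<epsilon> / (2 * K)) * emeasure lborel (cball x \<rho>)"
      using lp unfolding LP_def by blast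
    show "\<forall>\<^sub>F r in at_right 0. dist ((\<integral>y. indicator (E r) y * u y \<partial>lborel) / measure lborel (E r)) (u x) < \<epsilon>"
      unfolding eventually_at_right_field
    proof (intro exI[of _ "d * c"] conjI allI impI)
      show "0 < d * c" using d c by simp
      fix r :: real assume r0: "0 < r" and rdc: "r < d * c"
      then have rd: "r / c < d" using c by (auto simp: field_simps)
      have rc: "r / c > 0" using r0 c by simp
      let ?m = "measure lborel (E r)"
      have m: "?m > 0" using mEpos[OF r0] .
      have iu: "integrable lborel (\<lambda>y. indicator (E r) y * u y)"
        using u EB by (simp add: integrable_real_mult_indicator mult.commute)
      have ic: "integrable lborel (\<lambda>y. indicator (E r) y * u x)"
        using Efin[of r] EB by (intro integrable_mult_left) (auto simp: less_top)
      have ig: "integrable lborel (\<lambda>y. indicator (E r) y * (u y - u x))"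
        using iu ic by (simp add: right_diff_distrib Bochner_Integration.integrable_diff)
      have "(\<integral>y. indicator (E r) y * u y \<partial>lborel) - u x * ?m = (\<integral>y. indicator (E r) y * (u y - u x) \<partial>lborel)"
      proof -
        have "(\<integral>y. indicator (E r) y * u x \<partial>lborel) = u x * ?m"
          using EB Efin[of r] by (simp add: less_top mult.commute)
        then show ?thesis using iu ic by (simp add: right_diff_distrib Bochner_Integration.integral_diff)
      qed
      also have "\<bar>\<dots>\<bar> \<le> (\<integral>y. \<bar>indicator (E r) y * (u y - u x)\<bar> \<partial>lborel)"
        by (rule integral_abs_bound)
      finally have bnd1: "\<bar>(\<integral>y. indicator (E r) y * u y \<partial>lborel) - u x * ?m\<bar> \<le> (\<integral>y. \<bar>indicator (E r) y * (u y - u x)\<bar> \<partial>lborel)" .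
      have "ennreal (\<integral>y. \<bar>indicator (E r) y * (u y - u x)\<bar> \<partial>lborel) = (\<integral>\<^sup>+y. ennreal \<bar>indicator (E r) y * (u y - u x)\<bar> \<partial>lborel)"
        using ig by (intro nn_integral_eq_integral[symmetric]) auto
      also have "\<dots> \<le> (\<integral>\<^sup>+y. ennreal \<bar>u y - u x\<bar> * indicator (cball x (r/c)) y \<partial>lborel)"
        using sub2[of r] by (intro nn_integral_mono) (auto simp: indicator_def abs_mult)
      also have "\<dots> \<le> ennreal (\<epsilon> / (2 * K)) * emeasure lborel (cball x (r/c))"
        using dP[OF rc rd] .
      also have "\<dots> = ennreal (\<epsilon> / (2 * K) * (V * (r/c) ^ D))"
      proof -
        have "ennreal (\<epsilon> / (2 * K)) * ennreal (V * (r/c) ^ D) = ennreal (\<epsilon> / (2 * K) * (V * (r/c) ^ D))"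
          using rc \<epsilon> K V by (intro ennreal_mult[symmetric]) auto
        then show ?thesis using emc[of "r/c"] rc by simp
      qed
      also have "\<epsilon> / (2 * K) * (V * (r/c) ^ D) = \<epsilon> / 2 * (V * (r/C) ^ D)"
      proof -
        have rcC: "r/c = (C/c) * (r/C)" using C c by simp
        have "(r/c) ^ D = ((C/c) * (r/C)) ^ D" using rcC by (rule arg_cong[where f="\<lambda>z. z ^ D"])
        also have "\<dots> = K * (r/C) ^ D" by (simp only: K_def power_mult_distrib)
        finally have "(r/c) ^ D = K * (r/C) ^ D" .
        moreover have gen: "\<epsilon> / (2 * K) * (V * (K * z)) = \<epsilon> / 2 * (V * z)" for z
          using K by simp
        ultimately show ?thesis by simp
      qed
      also have "ennreal (\<epsilon> / 2 * (V * (r/C) ^ D)) \<le> ennreal (\<epsilon> / 2 * ?m)"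
        using mE[OF r0] \<epsilon> by (intro ennreal_leI mult_left_mono) auto
      finally have "(\<integral>y. \<bar>indicator (E r) y * (u y - u x)\<bar> \<partial>lborel) \<le> \<epsilon> / 2 * ?m"
        using \<epsilon> m by (simp add: ennreal_le_iff)
      with bnd1 have "\<bar>(\<integral>y. indicator (E r) y * u y \<partial>lborel) - u x * ?m\<bar> \<le> \<epsilon> / 2 * ?m" by linarith
      then have "\<bar>(\<integral>y. indicator (E r) y * u y \<partial>lborel) / ?m - u x\<bar> \<le> \<epsilon> / 2"
        by (rule avg_aux[OF m])
      then show "dist ((\<integral>y. indicator (E r) y * u y \<partial>lborel) / ?m) (u x) < \<epsilon>"
        using \<epsilon> by (simp add: dist_real_def)
    qed
  qed
qed



lemma A_norm_bounds:
  fixes A :: "real^'q^'q"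
  assumes A_pd: "\<And>x. x \<noteq> 0 \<Longrightarrow> x \<bullet> (A *v x) > 0"
  shows "\<exists>c C. c > 0 \<and> (\<forall>v. c * norm v \<le> A_norm A v \<and> A_norm A v \<le> C * norm v)"
proof -
  have inj: "inj ((*v) A)"
  proof (rule injI)
    fix x y assume "A *v x = A *v y"
    then have "A *v (x - y) = 0" by (simp add: matrix_vector_mult_diff_distrib)
    then show "x = y" using A_pd[of "x - y"] by (cases "x - y = 0") auto
  qed
  then obtain B where "B ** A = mat 1" using matrix_left_invertible_injective by blast
  then have "invertible A" using invertible_left_inverse by blast
  then have "\<exists>A'. A ** A' = mat 1 \<and> A' ** A = mat 1" by (simp add: invertible_def)
  then have AB: "A ** matrix_inv A = mat 1"
    unfolding matrix_inv_def by (rule someI2_ex) auto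
  define B0 where "B0 = matrix_inv A"
  define Q where "Q v = v \<bullet> (B0 *v v)" for v
  have AB0: "A *v (B0 *v v) = v" for v using AB by (simp add: matrix_vector_mul_assoc B0_def)
  have Qpos: "Q v > 0" if "v \<noteq> 0" for v
  proof -
    define w where "w = B0 *v v"
    have "w \<noteq> 0" using that AB0[of v] by (auto simp: w_def)
    then have "w \<bullet> (A *v w) > 0" by (rule A_pd)
    moreover have "Q v = (A *v w) \<bullet> w" using AB0[of v] by (simp add: Q_def w_def)
    ultimately show ?thesis by (simp add: inner_commute)
  qed
  have Qcont: "continuous_on UNIV Q" unfolding Q_def by (intro continuous_intros)
  obtain b :: "real^'q" where b: "b \<in> Basis" using nonempty_Basis by blast
  have sne: "sphere (0::real^'q) 1 \<noteq> {}" using b by (auto intro!: exI[of _ b])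
  obtain v0 where v0: "v0 \<in> sphere 0 1" "\<And>y. y \<in> sphere 0 1 \<Longrightarrow> Q v0 \<le> Q y"
    using continuous_attains_inf[OF compact_sphere sne continuous_on_subset[OF Qcont]] by blast
  define m where "m = Q v0"
  have "v0 \<noteq> 0" using v0(1) by auto
  then have m: "m > 0" using Qpos[of v0] by (simp add: m_def)
  obtain K where K: "K > 0" "\<And>x. norm (B0 *v x) \<le> K * norm x"
    using linear_bounded_pos[OF matrix_vector_mul_linear] by blast
  have Qhom: "Q (a *\<^sub>R v) = a^2 * Q v" for a v
    by (simp add: Q_def matrix_vector_mult_scaleR power2_eq_square)
  have lower: "m * (norm v)^2 \<le> Q v" for v
  proof (cases "v = 0")
    case True then show ?thesis by (simp add: Q_def)
  next
    case False
    define v1 where "v1 = (1 / norm v) *\<^sub>R v"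
    have "v1 \<in> sphere 0 1" using False by (simp add: v1_def)
    then have "m \<le> Q v1" using v0(2) by (simp add: m_def)
    moreover have "Q v = (norm v)^2 * Q v1"
      using False by (simp add: v1_def Qhom power2_eq_square)
    ultimately show ?thesis by (simp add: mult.commute mult_right_mono)
  qed
  have upper: "Q v \<le> K * (norm v)^2" for v
  proof -
    have "Q v \<le> norm v * norm (B0 *v v)" unfolding Q_def by (rule order_trans[OF abs_ge_self Cauchy_Schwarz_ineq2])
    also have "\<dots> \<le> norm v * (K * norm v)" using K(2) by (intro mult_left_mono) auto
    finally show ?thesis by (simp add: power2_eq_square mult_ac)
  qed
  have AN: "A_norm A v = sqrt (Q v)" for v by (simp add: A_norm_def Q_def B0_def)
  have 1: "sqrt m * norm v \<le> A_norm A v" for v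
    using real_sqrt_le_mono[OF lower[of v]] m by (simp add: AN real_sqrt_mult)
  have 2: "A_norm A v \<le> sqrt K * norm v" for v
    using real_sqrt_le_mono[OF upper[of v]] K by (simp add: AN real_sqrt_mult)
  have "sqrt m > 0" using m by simp
  then show ?thesis using 1 2 by blast
qed



lemma PiM_comp_integral:
  fixes P :: "'a measure" and g :: "'a \<Rightarrow> real" and n j :: nat
  assumes P: "prob_space P" and j: "j < n" and g: "g \<in> borel_measurable P"
  shows "integrable (PiM {..<n} (\<lambda>_. P)) (\<lambda>\<omega>. g (\<omega> j)) \<longleftrightarrow> integrable P g"
    and "(\<integral>\<omega>. g (\<omega> j) \<partial>PiM {..<n} (\<lambda>_. P)) = (\<integral>x. g x \<partial>P)"
proof -
  have D: "distr (PiM {..<n} (\<lambda>_. P)) P (\<lambda>\<omega>. \<omega> j) = P"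
    using distr_PiM_component[of "{..<n}" "\<lambda>_. P" j] P j by simp
  have m: "(\<lambda>\<omega>. \<omega> j) \<in> measurable (PiM {..<n} (\<lambda>_. P)) P"
    using j by (intro measurable_component_singleton) auto
  show "integrable (PiM {..<n} (\<lambda>_. P)) (\<lambda>\<omega>. g (\<omega> j)) \<longleftrightarrow> integrable P g"
    using integrable_distr_eq[OF m, of g] g D by simp
  show "(\<integral>\<omega>. g (\<omega> j) \<partial>PiM {..<n} (\<lambda>_. P)) = (\<integral>x. g x \<partial>P)"
    using integral_distr[OF m, of g] g D by simp
qed

lemma cross_term:
  fixes P :: "'a measure" and \<phi> :: "'a \<Rightarrow> real" and n j k :: nat
  assumes P: "prob_space P" and j: "j < n" and k: "k < n" and jk: "j \<noteq> k"
    and i1: "integrable P \<phi>"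
  shows "integrable (PiM {..<n} (\<lambda>_. P)) (\<lambda>\<omega>. \<phi> (\<omega> j) * \<phi> (\<omega> k))"
    and "(\<integral>\<omega>. \<phi> (\<omega> j) * \<phi> (\<omega> k) \<partial>PiM {..<n} (\<lambda>_. P)) = (\<integral>x. \<phi> x \<partial>P) * (\<integral>x. \<phi> x \<partial>P)"
proof -
  interpret PP: product_prob_space "\<lambda>_::nat. P" "{..<n}"
    by (rule product_prob_spaceI) (rule P)
  interpret Pp: prob_space P by (rule P)
  define f where "f i = (if i = j \<or> i = k then \<phi> else (\<lambda>_. 1))" for i
  have fi: "integrable P (f i)" for i using i1 by (simp add: f_def)
  have eq: "(\<Prod>i\<in>{..<n}. f i (\<omega> i)) = \<phi> (\<omega> j) * \<phi> (\<omega> k)" for \<omega> :: "nat \<Rightarrow> 'a"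
  proof -
    have "(\<Prod>i\<in>{..<n}. f i (\<omega> i)) = (\<Prod>i\<in>{j,k}. f i (\<omega> i)) * (\<Prod>i\<in>{..<n} - {j,k}. f i (\<omega> i))"
      using j k by (subst prod.subset_diff[of "{j,k}"]) (auto simp: mult.commute)
    also have "(\<Prod>i\<in>{..<n} - {j,k}. f i (\<omega> i)) = 1"
      by (intro prod.neutral) (auto simp: f_def)
    finally show ?thesis using jk by (simp add: f_def)
  qed
  have eq2: "(\<Prod>i\<in>{..<n}. integral\<^sup>L P (f i)) = (\<integral>x. \<phi> x \<partial>P) * (\<integral>x. \<phi> x \<partial>P)"
  proof -
    have "(\<Prod>i\<in>{..<n}. integral\<^sup>L P (f i)) = (\<Prod>i\<in>{j,k}. integral\<^sup>L P (f i)) * (\<Prod>i\<in>{..<n} - {j,k}. integral\<^sup>L P (f i))"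
      using j k by (subst prod.subset_diff[of "{j,k}"]) (auto simp: mult.commute)
    also have "(\<Prod>i\<in>{..<n} - {j,k}. integral\<^sup>L P (f i)) = 1"
      by (intro prod.neutral) (auto simp: f_def prob_space.prob_space[OF P])
    finally show ?thesis using jk by (simp add: f_def)
  qed
  show "integrable (PiM {..<n} (\<lambda>_. P)) (\<lambda>\<omega>. \<phi> (\<omega> j) * \<phi> (\<omega> k))"
    using PP.product_integrable_prod[of "{..<n}" f] fi by (simp add: eq)
  show "(\<integral>\<omega>. \<phi> (\<omega> j) * \<phi> (\<omega> k) \<partial>PiM {..<n} (\<lambda>_. P)) = (\<integral>x. \<phi> x \<partial>P) * (\<integral>x. \<phi> x \<partial>P)"
    using PP.product_integral_prod[of "{..<n}" f] fi by (simp add: eq eq2)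
qed


lemma var_avg:
  fixes P :: "'a measure" and h :: "'a \<Rightarrow> real" and n :: nat
  assumes P: "prob_space P" and hm: "h \<in> borel_measurable P" and i1: "integrable P h"
    and i2: "integrable P (\<lambda>x. (h x)^2)" and n: "n \<ge> 1"
  shows "real n * var_of (PiM {..<n} (\<lambda>_. P)) (\<lambda>\<omega>. 1 / real n * (\<Sum>j<n. h (\<omega> j))) = var_of P h"
proof -
  define M where "M = PiM {..<n} (\<lambda>_. P)"
  define \<mu> where "\<mu> = (\<integral>x. h x \<partial>P)"
  define \<phi> where "\<phi> x = h x - \<mu>" for x
  interpret Pp: prob_space P by (rule P)
  have i\<phi>: "integrable P \<phi>" unfolding \<phi>_def using i1 by auto
  have m\<phi>: "\<phi> \<in> borel_measurable P" using i\<phi> by auto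
  have i\<phi>2: "integrable P (\<lambda>x. (\<phi> x)^2)"
  proof -
    have "(\<lambda>x. (\<phi> x)^2) = (\<lambda>x. (h x)^2 - 2 * \<mu> * h x + \<mu>^2)"
      by (auto simp: \<phi>_def power2_eq_square algebra_simps)
    then show ?thesis using i1 i2 by auto
  qed
  have E\<phi>: "(\<integral>x. \<phi> x \<partial>P) = 0"
    using i1 by (simp add: \<phi>_def \<mu>_def Bochner_Integration.integral_diff Pp.prob_space)
  have comp: "integrable M (\<lambda>\<omega>. g (\<omega> j))" "(\<integral>\<omega>. g (\<omega> j) \<partial>M) = (\<integral>x. g x \<partial>P)"
    if "j < n" "integrable P g" for g :: "'a \<Rightarrow> real" and j
    using PiM_comp_integral[OF P that(1), of g] that(2) by (auto simp: M_def)
  define Y where "Y \<omega> = 1 / real n * (\<Sum>j<n. h (\<omega> j))" for \<omega> :: "nat \<Rightarrow> 'a"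
  have EY: "(\<integral>\<omega>. Y \<omega> \<partial>M) = \<mu>"
  proof -
    have "(\<integral>\<omega>. Y \<omega> \<partial>M) = 1 / real n * (\<Sum>j<n. (\<integral>\<omega>. h (\<omega> j) \<partial>M))"
      unfolding Y_def using comp(1)[OF _ i1] by (simp add: integral_mult_right_zero Bochner_Integration.integral_sum)
    also have "\<dots> = 1 / real n * (real n * \<mu>)" using comp(2)[OF _ i1] by (simp add: \<mu>_def)
    finally show ?thesis using n by simp
  qed
  have Yc: "Y \<omega> - \<mu> = 1 / real n * (\<Sum>j<n. \<phi> (\<omega> j))" for \<omega>
  proof -
    have "(\<Sum>j<n. \<phi> (\<omega> j)) = (\<Sum>j<n. h (\<omega> j)) - real n * \<mu>"
      by (simp add: \<phi>_def sum_subtractf)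
    then show ?thesis using n by (simp add: Y_def field_simps)
  qed
  have cross: "integrable M (\<lambda>\<omega>. \<phi> (\<omega> j) * \<phi> (\<omega> k)) \<and>
      (\<integral>\<omega>. \<phi> (\<omega> j) * \<phi> (\<omega> k) \<partial>M) = (if j = k then (\<integral>x. (\<phi> x)^2 \<partial>P) else 0)"
    if "j < n" "k < n" for j k
  proof (cases "j = k")
    case True
    then show ?thesis using comp[OF that(1) i\<phi>2] by (simp add: power2_eq_square)
  next
    case False
    then show ?thesis using cross_term[OF P that False i\<phi>] E\<phi> by (simp add: M_def)
  qed
  have "var_of M Y = (\<integral>\<omega>. (1 / real n)^2 * (\<Sum>j<n. \<Sum>k<n. \<phi> (\<omega> j) * \<phi> (\<omega> k)) \<partial>M)"
    unfolding var_of_def EY Yc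
    by (intro Bochner_Integration.integral_cong refl) (simp add: power_mult_distrib power2_eq_square sum_product)
  also have "\<dots> = (1 / real n)^2 * (\<Sum>j<n. \<Sum>k<n. (\<integral>\<omega>. \<phi> (\<omega> j) * \<phi> (\<omega> k) \<partial>M))"
  proof -
    have int_in: "integrable M (\<lambda>\<omega>. \<Sum>k<n. \<phi> (\<omega> j) * \<phi> (\<omega> k))" if "j < n" for j
      using cross that by (intro Bochner_Integration.integrable_sum) auto
    have "(\<integral>\<omega>. (\<Sum>j<n. \<Sum>k<n. \<phi> (\<omega> j) * \<phi> (\<omega> k)) \<partial>M) = (\<Sum>j<n. \<integral>\<omega>. (\<Sum>k<n. \<phi> (\<omega> j) * \<phi> (\<omega> k)) \<partial>M)"
      using int_in by (intro Bochner_Integration.integral_sum) auto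
    also have "\<dots> = (\<Sum>j<n. \<Sum>k<n. (\<integral>\<omega>. \<phi> (\<omega> j) * \<phi> (\<omega> k) \<partial>M))"
      using cross by (intro sum.cong refl Bochner_Integration.integral_sum) auto
    finally show ?thesis by (simp add: integral_mult_right_zero)
  qed
  also have "\<dots> = (1 / real n)^2 * (real n * (\<integral>x. (\<phi> x)^2 \<partial>P))"
    using cross by (simp add: sum.delta)
  finally have "var_of M Y = (1 / real n)^2 * (real n * (\<integral>x. (\<phi> x)^2 \<partial>P))" .
  moreover have "var_of P h = (\<integral>x. (\<phi> x)^2 \<partial>P)" by (simp add: var_of_def \<phi>_def \<mu>_def)
  ultimately show ?thesis using n by (simp add: M_def Y_def[abs_def] power2_eq_square)
qed



lemma fst_meas: "(fst :: ('a::euclidean_space \<times> 'b::euclidean_space) \<Rightarrow> 'a) \<in> borel_measurable borel"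
  by (intro borel_measurable_continuous_onI continuous_intros)

lemma snd_meas: "(snd :: ('a::euclidean_space \<times> 'b::euclidean_space) \<Rightarrow> 'b) \<in> borel_measurable borel"
  by (intro borel_measurable_continuous_onI continuous_intros)

lemma joint_law_eq:
  "joint_law f = density lborel (\<lambda>x. ennreal ((\<lambda>(t, s). f s t) x))"
  unfolding joint_law_def by (intro arg_cong[where f="density lborel"]) (auto simp: fun_eq_iff)

lemma joint_fubini:
  fixes f :: "real^'q \<Rightarrow> real^'p \<Rightarrow> real" and w :: "real^'p \<Rightarrow> real"
  assumes f_meas: "(\<lambda>(t, s). f s t) \<in> borel_measurable (borel :: ((real^'p) \<times> (real^'q)) measure)"
    and f_nonneg: "\<And>s t. f s t \<ge> 0"
    and w_meas: "w \<in> borel_measurable borel"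
    and iw: "integrable (joint_law f) (\<lambda>x. w (fst x))"
  shows "integrable lborel (\<lambda>s. \<integral>t. f s t * w t \<partial>lborel)"
    and "AE s in lborel. integrable lborel (\<lambda>t. f s t * w t)"
    and "\<And>E. E \<in> sets borel \<Longrightarrow> (\<integral>x. indicator E (snd x) * w (fst x) \<partial>joint_law f)
            = (\<integral>s. indicator E s * (\<integral>t. f s t * w t \<partial>lborel) \<partial>lborel)"
proof -
  define F where "F = (\<lambda>(t, s). f s t)"
  have Fm: "F \<in> borel_measurable lborel" using f_meas by (simp add: F_def)
  have wm: "(\<lambda>x. w (fst x)) \<in> borel_measurable (lborel :: ((real^'p) \<times> (real^'q)) measure)"
    using measurable_compose[OF fst_meas w_meas] by simp
  have J: "joint_law f = density lborel (\<lambda>x. ennreal (F x))" unfolding F_def by (rule joint_law_eq)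
  have i1: "integrable lborel (\<lambda>x. F x *\<^sub>R w (fst x))"
    using iw unfolding J by (subst (asm) integrable_density) (use wm Fm f_nonneg in \<open>auto simp: F_def split: prod.split\<close>)
  have i2: "integrable (lborel \<Otimes>\<^sub>M lborel) (\<lambda>(t, s). f s t * w t)"
  proof -
    have "(\<lambda>(t, s). f s t * w t) = (\<lambda>x. F x *\<^sub>R w (fst x))" by (auto simp: F_def fun_eq_iff)
    then show ?thesis using i1 by (simp add: lborel_prod)
  qed
  show "integrable lborel (\<lambda>s. \<integral>t. f s t * w t \<partial>lborel)"
    using lborel_pair.integrable_snd[of "\<lambda>t s. f s t * w t"] i2 by simp
  show "AE s in lborel. integrable lborel (\<lambda>t. f s t * w t)"
    using lborel_pair.AE_integrable_snd[of "\<lambda>t s. f s t * w t"] i2 by simp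
  fix E :: "(real^'q) set" assume E: "E \<in> sets borel"
  have sm: "(\<lambda>x. indicator E (snd x) :: real) \<in> borel_measurable (lborel :: ((real^'p) \<times> (real^'q)) measure)"
    using measurable_compose[OF snd_meas borel_measurable_indicator[OF E]] by simp
  have i3: "integrable (lborel \<Otimes>\<^sub>M lborel) (\<lambda>(t, s). indicator E s * (f s t * w t))"
  proof -
    have "(\<lambda>(t, s). indicator E s * (f s t * w t)) = (\<lambda>x. indicator E (snd x) * (F x *\<^sub>R w (fst x)))"
      by (auto simp: F_def fun_eq_iff)
    moreover have "integrable lborel (\<lambda>x. indicator E (snd x) * (F x *\<^sub>R w (fst x)) :: real)"
    proof (rule Bochner_Integration.integrable_bound[OF i1])
      have "(\<lambda>x. F x *\<^sub>R w (fst x)) \<in> borel_measurable lborel" using i1 by auto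
      then show "(\<lambda>x. indicator E (snd x) * (F x *\<^sub>R w (fst x)) :: real) \<in> borel_measurable lborel"
        using sm by (intro borel_measurable_times)
    qed (auto simp: indicator_def)
    ultimately show ?thesis by (simp add: lborel_prod)
  qed
  have "(\<integral>x. indicator E (snd x) * w (fst x) \<partial>joint_law f) = (\<integral>x. F x *\<^sub>R (indicator E (snd x) * w (fst x)) \<partial>lborel)"
    unfolding J using sm wm Fm f_nonneg by (subst integral_density) (auto simp: F_def split: prod.split)
  also have "\<dots> = (\<integral>x. (\<lambda>(t, s). indicator E s * (f s t * w t)) x \<partial>(lborel \<Otimes>\<^sub>M lborel))"
    by (simp add: lborel_prod F_def case_prod_beta' mult_ac)
  also have "\<dots> = (\<integral>s. (\<integral>t. indicator E s * (f s t * w t) \<partial>lborel) \<partial>lborel)"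
    using lborel_pair.integral_snd[of "\<lambda>t s. indicator E s * (f s t * w t)"] i3 by simp
  also have "\<dots> = (\<integral>s. indicator E s * (\<integral>t. f s t * w t \<partial>lborel) \<partial>lborel)"
    by (simp add: integral_mult_right_zero)
  finally show "(\<integral>x. indicator E (snd x) * w (fst x) \<partial>joint_law f)
            = (\<integral>s. indicator E s * (\<integral>t. f s t * w t \<partial>lborel) \<partial>lborel)" .
qed


lemma accept_law_facts:
  fixes M :: "('a::euclidean_space \<times> 'b::euclidean_space) measure" and w :: "'a \<Rightarrow> real"
  assumes sM: "sets M = sets borel" and D: "D \<in> sets borel" and pos: "emeasure M D > 0"
    and fin: "emeasure M D < \<infinity>"
  shows "prob_space (distr (uniform_measure M D) borel fst)"
    and "w \<in> borel_measurable borel \<Longrightarrow> integrable M (\<lambda>x. w (fst x)) \<Longrightarrow>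
         integrable (distr (uniform_measure M D) borel fst) w"
    and "w \<in> borel_measurable borel \<Longrightarrow> integrable M (\<lambda>x. w (fst x)) \<Longrightarrow>
         (\<integral>y. w y \<partial>distr (uniform_measure M D) borel fst) = (\<integral>x. indicator D x * w (fst x) \<partial>M) / measure M D"
proof -
  define Z where "Z = measure M D"
  have eZ: "emeasure M D = ennreal Z" using fin by (simp add: Z_def emeasure_eq_ennreal_measure less_top)
  have Z: "Z > 0" using pos eZ by simp
  have DM: "D \<in> sets M" using D sM by simp
  have fm: "fst \<in> measurable M borel" using fst_meas measurable_cong_sets[OF sM refl] by blast
  have U: "uniform_measure M D = density M (\<lambda>x. ennreal (indicator D x / Z))"
  proof -
    have "(\<lambda>x. indicator D x / ennreal Z) = (\<lambda>x. ennreal (indicator D x / Z))"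
      using Z divide_ennreal[of 1 Z] by (auto simp: fun_eq_iff indicator_def)
    then show ?thesis unfolding uniform_measure_def eZ by simp
  qed
  have um: "(\<lambda>x. indicator D x / Z :: real) \<in> borel_measurable M" using DM by measurable
  have fmU: "fst \<in> measurable (uniform_measure M D) borel" using fm by simp
  show "prob_space (distr (uniform_measure M D) borel fst)"
  proof -
    interpret U: prob_space "uniform_measure M D"
      using pos fin by (intro prob_space_uniform_measure) auto
    show ?thesis using fmU by (rule U.prob_space_distr)
  qed
  assume w: "w \<in> borel_measurable borel" and iw: "integrable M (\<lambda>x. w (fst x))"
  have wm: "(\<lambda>x. w (fst x)) \<in> borel_measurable M" using measurable_compose[OF fm w] .
  have iw2: "integrable M (\<lambda>x. (indicator D x / Z) *\<^sub>R w (fst x))"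
  proof -
    have "integrable M (\<lambda>x. w (fst x) * indicator D x)" using integrable_real_mult_indicator[OF DM iw] by simp
    then have "integrable M (\<lambda>x. (1/Z) * (w (fst x) * indicator D x))" by (rule integrable_mult_right)
    then show ?thesis by (simp add: mult_ac)
  qed
  show "integrable (distr (uniform_measure M D) borel fst) w"
  proof -
    have "integrable (uniform_measure M D) (\<lambda>x. w (fst x))"
      unfolding U using iw2 um wm Z by (subst integrable_density) auto
    then show ?thesis using integrable_distr_eq[OF fmU w] by simp
  qed
  show "(\<integral>y. w y \<partial>distr (uniform_measure M D) borel fst) = (\<integral>x. indicator D x * w (fst x) \<partial>M) / measure M D"
  proof -
    have "(\<integral>y. w y \<partial>distr (uniform_measure M D) borel fst) = (\<integral>x. w (fst x) \<partial>uniform_measure M D)"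
      by (rule integral_distr[OF fmU w])
    also have "\<dots> = (\<integral>x. (indicator D x / Z) *\<^sub>R w (fst x) \<partial>M)"
      unfolding U using um wm Z by (subst integral_density) auto
    also have "\<dots> = (\<integral>x. (1/Z) * (indicator D x * w (fst x)) \<partial>M)" by (simp add: mult_ac)
    also have "\<dots> = (\<integral>x. indicator D x * w (fst x) \<partial>M) / Z" by (simp add: integral_mult_right_zero)
    finally show ?thesis by (simp add: Z_def)
  qed
qed



lemma pointwise:
  fixes f :: "real^'q \<Rightarrow> real^'p \<Rightarrow> real" and h :: "real^'p \<Rightarrow> real"
    and A :: "real^'q^'q" and sstar :: "real^'q"
  assumes Jprob: "prob_space (joint_law f)"
    and sJ: "sets (joint_law f) = sets borel"
    and hm: "h \<in> borel_measurable borel"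
    and iJ1: "integrable (joint_law f) (\<lambda>x. h (fst x))"
    and iJ2: "integrable (joint_law f) (\<lambda>x. (h (fst x))^2)"
    and fub0: "\<And>E. E \<in> sets borel \<Longrightarrow> (\<integral>x. indicator E (snd x) * 1 \<partial>joint_law f)
            = (\<integral>s. indicator E s * (\<integral>t. f s t * 1 \<partial>lborel) \<partial>lborel)"
    and fub1: "\<And>E. E \<in> sets borel \<Longrightarrow> (\<integral>x. indicator E (snd x) * h (fst x) \<partial>joint_law f)
            = (\<integral>s. indicator E s * (\<integral>t. f s t * h t \<partial>lborel) \<partial>lborel)"
    and fub2: "\<And>E. E \<in> sets borel \<Longrightarrow> (\<integral>x. indicator E (snd x) * (h (fst x))^2 \<partial>joint_law f)
            = (\<integral>s. indicator E s * (\<integral>t. f s t * (h t)^2 \<partial>lborel) \<partial>lborel)"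
    and Eb: "\<And>r. {s. A_norm A (s - sstar) \<le> r} \<in> sets borel"
    and lim0: "((\<lambda>r. (\<integral>s. indicator {s. A_norm A (s - sstar) \<le> r} s * (\<integral>t. f s t * 1 \<partial>lborel) \<partial>lborel)
                 / measure lborel {s. A_norm A (s - sstar) \<le> r}) \<longlongrightarrow> (\<integral>t. f sstar t * 1 \<partial>lborel)) (at_right 0)"
    and lim1: "((\<lambda>r. (\<integral>s. indicator {s. A_norm A (s - sstar) \<le> r} s * (\<integral>t. f s t * h t \<partial>lborel) \<partial>lborel)
                 / measure lborel {s. A_norm A (s - sstar) \<le> r}) \<longlongrightarrow> (\<integral>t. f sstar t * h t \<partial>lborel)) (at_right 0)"
    and lim2: "((\<lambda>r. (\<integral>s. indicator {s. A_norm A (s - sstar) \<le> r} s * (\<integral>t. f s t * (h t)^2 \<partial>lborel) \<partial>lborel)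
                 / measure lborel {s. A_norm A (s - sstar) \<le> r}) \<longlongrightarrow> (\<integral>t. f sstar t * (h t)^2 \<partial>lborel)) (at_right 0)"
    and if0: "integrable lborel (\<lambda>t. f sstar t)"
    and if1: "integrable lborel (\<lambda>t. f sstar t * h t)"
    and if2: "integrable lborel (\<lambda>t. f sstar t * (h t)^2)"
    and f_nonneg: "\<And>s t. f s t \<ge> 0"
    and pos: "marg_S f sstar > 0"
  shows "uniform_limit {1..}
             (\<lambda>\<delta> n. real n * abc_var_Y f A h sstar \<delta> n)
             (\<lambda>n. cond_var f h sstar)
             (at_right 0)"
proof -
  define J where "J = joint_law f"
  define E where "E r = {s. A_norm A (s - sstar) \<le> r}" for r
  define D where "D r = {x :: (real^'p) \<times> (real^'q). A_norm A (snd x - sstar) \<le> r}" for r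
  define G0 where "G0 = (\<integral>t. f sstar t * 1 \<partial>lborel)"
  define G1 where "G1 = (\<integral>t. f sstar t * h t \<partial>lborel)"
  define G2 where "G2 = (\<integral>t. f sstar t * (h t)^2 \<partial>lborel)"
  define a0 where "a0 r = (\<integral>s. indicator (E r) s * (\<integral>t. f s t * 1 \<partial>lborel) \<partial>lborel)" for r
  define a1 where "a1 r = (\<integral>s. indicator (E r) s * (\<integral>t. f s t * h t \<partial>lborel) \<partial>lborel)" for r
  define a2 where "a2 r = (\<integral>s. indicator (E r) s * (\<integral>t. f s t * (h t)^2 \<partial>lborel) \<partial>lborel)" for r
  define m where "m r = measure lborel (E r)" for r
  interpret J: prob_space J unfolding J_def by (rule Jprob)
  have G0pos: "G0 > 0" using pos by (simp add: G0_def marg_S_def)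
  have DE: "indicator (D r) x = (indicator (E r) (snd x) :: real)" for r x
    by (simp add: D_def E_def indicator_def)
  have Db: "D r \<in> sets borel" for r
  proof -
    have "snd -` E r \<inter> space borel \<in> sets (borel :: ((real^'p) \<times> (real^'q)) measure)"
      using measurable_sets[OF snd_meas Eb[of r, folded E_def]] .
    then show ?thesis by (simp add: D_def E_def vimage_def)
  qed
  have ev0: "\<forall>\<^sub>F r in at_right 0. a0 r / m r > 0"
    using lim0 G0pos unfolding a0_def[symmetric] m_def[symmetric] E_def[symmetric] G0_def[symmetric]
    by (intro order_tendstoD) auto
  have ev: "\<forall>\<^sub>F r in at_right 0. m r > 0 \<and> a0 r > 0"
  proof (rule eventually_mono[OF ev0])
    fix r assume "a0 r / m r > 0"
    moreover have "m r \<ge> 0" by (simp add: m_def)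
    ultimately show "m r > 0 \<and> a0 r > 0"
      by (metis divide_eq_0_iff divide_pos_neg less_eq_real_def not_less zero_less_divide_iff)
  qed
  have mom: "prob_space (abc_accept_law f A sstar r) \<and>
      integrable (abc_accept_law f A sstar r) h \<and>
      integrable (abc_accept_law f A sstar r) (\<lambda>t. (h t)^2) \<and>
      (\<integral>t. h t \<partial>abc_accept_law f A sstar r) = a1 r / a0 r \<and>
      (\<integral>t. (h t)^2 \<partial>abc_accept_law f A sstar r) = a2 r / a0 r"
    if r: "m r > 0 \<and> a0 r > 0" for r
  proof -
    have law: "abc_accept_law f A sstar r = distr (uniform_measure J (D r)) borel fst"
      unfolding abc_accept_law_def J_def D_def by (simp add: case_prod_beta')
    have "measure J (D r) = (\<integral>x. indicator (D r) x \<partial>J)" using Db[of r] sJ by (simp add: J_def)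
    also have "\<dots> = (\<integral>x. indicator (E r) (snd x) * 1 \<partial>J)" by (simp add: DE)
    also have "\<dots> = a0 r" unfolding J_def a0_def by (rule fub0) (simp add: E_def Eb)
    finally have mJ: "measure J (D r) = a0 r" .
    have eJ: "emeasure J (D r) = ennreal (a0 r)" using mJ by (simp add: J.emeasure_eq_measure)
    have sJ': "sets J = sets borel" using sJ by (simp add: J_def)
    have pos': "emeasure J (D r) > 0" using eJ r by simp
    have fin': "emeasure J (D r) < \<infinity>" using eJ by simp
    note F = accept_law_facts[OF sJ' Db pos' fin']
    have h2m: "(\<lambda>t. (h t)^2) \<in> borel_measurable borel" using hm by measurable
    have I1: "(\<integral>x. indicator (D r) x * h (fst x) \<partial>J) = a1 r"
      unfolding DE J_def a1_def by (rule fub1) (simp add: E_def Eb)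
    have I2: "(\<integral>x. indicator (D r) x * (h (fst x))^2 \<partial>J) = a2 r"
      unfolding DE J_def a2_def by (rule fub2) (simp add: E_def Eb)
    show ?thesis unfolding law
      using F(1) F(2)[OF hm] F(2)[OF h2m] F(3)[OF hm] F(3)[OF h2m] iJ1 iJ2 I1 I2 mJ
      by (simp add: J_def)
  qed
  have var_eq: "real n * abc_var_Y f A h sstar r n = a2 r / a0 r - (a1 r / a0 r)^2"
    if r: "m r > 0 \<and> a0 r > 0" and n: "n \<ge> 1" for r n
  proof -
    note mm = mom[OF r]
    interpret P: prob_space "abc_accept_law f A sstar r" using mm by simp
    have hmP: "h \<in> borel_measurable (abc_accept_law f A sstar r)"
      using hm by (simp add: abc_accept_law_def)
    have "real n * abc_var_Y f A h sstar r n = var_of (abc_accept_law f A sstar r) h"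
      unfolding abc_var_Y_def using var_avg[OF _ hmP _ _ n] mm by simp
    also have "\<dots> = a2 r / a0 r - (a1 r / a0 r)^2"
      unfolding var_of_def using P.variance_eq[of h] mm by simp
    finally show ?thesis .
  qed
  have cv: "cond_var f h sstar = G2 / G0 - (G1 / G0)^2"
  proof -
    define Q where "Q = density lborel (\<lambda>t. ennreal (cond_dens f sstar t))"
    have cd: "cond_dens f sstar t = f sstar t / G0" for t
      using pos by (simp add: cond_dens_def G0_def marg_S_def)
    have fm: "(\<lambda>t. f sstar t) \<in> borel_measurable lborel" using if0 by auto
    have cdm: "(\<lambda>t. cond_dens f sstar t) \<in> borel_measurable lborel"
      using fm by (simp add: cd)
    have cdn: "AE t in lborel. 0 \<le> cond_dens f sstar t" using f_nonneg G0pos by (simp add: cd)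
    have cdm': "(\<lambda>t. ennreal (cond_dens f sstar t)) \<in> borel_measurable lborel" using cdm by measurable
    have "emeasure Q (space Q) = emeasure Q UNIV" by (simp add: Q_def)
    also have "\<dots> = (\<integral>\<^sup>+t. ennreal (cond_dens f sstar t) * indicator UNIV t \<partial>lborel)"
      unfolding Q_def using cdm' by (rule emeasure_density) simp
    also have "\<dots> = (\<integral>\<^sup>+t. ennreal (f sstar t / G0) \<partial>lborel)" by (simp add: cd)
    also have "\<dots> = ennreal (\<integral>t. f sstar t / G0 \<partial>lborel)"
      using if0 f_nonneg G0pos by (intro nn_integral_eq_integral) auto
    also have "(\<integral>t. f sstar t / G0 \<partial>lborel) = 1"
      using G0pos by (simp add: G0_def)
    finally interpret Q: prob_space Q by (intro prob_spaceI) simp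
    have Qeq: "Q = density lborel (\<lambda>t. ennreal (f sstar t / G0))" by (simp add: Q_def cd)
    have fdm: "(\<lambda>t. f sstar t / G0) \<in> borel_measurable lborel" using fm by measurable
    have fdn: "AE t in lborel. 0 \<le> f sstar t / G0" using f_nonneg G0pos by simp
    have hm': "h \<in> borel_measurable lborel" using hm by simp
    have h2m': "(\<lambda>t. (h t)^2) \<in> borel_measurable lborel" using hm by measurable
    have iQ1: "integrable Q h"
      unfolding Qeq integrable_density[OF hm' fdm fdn] using if1 by (auto intro: integrable_divide_zero)
    have iQ2: "integrable Q (\<lambda>t. (h t)^2)"
      unfolding Qeq integrable_density[OF h2m' fdm fdn] using if2 by (auto intro: integrable_divide_zero)
    have EQ1: "(\<integral>t. h t \<partial>Q) = G1 / G0"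
      unfolding Qeq integral_density[OF hm' fdm fdn] by (simp add: G1_def)
    have EQ2: "(\<integral>t. (h t)^2 \<partial>Q) = G2 / G0"
      unfolding Qeq integral_density[OF h2m' fdm fdn] by (simp add: G2_def)
    show ?thesis
      unfolding cond_var_def Q_def[symmetric] var_of_def
      using Q.variance_eq[OF iQ1 iQ2] EQ1 EQ2 by simp
  qed
  have L1: "((\<lambda>r. a1 r / a0 r) \<longlongrightarrow> G1 / G0) (at_right 0)"
  proof -
    have "((\<lambda>r. (a1 r / m r) / (a0 r / m r)) \<longlongrightarrow> G1 / G0) (at_right 0)"
      using lim1 lim0 G0pos unfolding a0_def[symmetric] a1_def[symmetric] m_def[symmetric]
        E_def[symmetric] G0_def[symmetric] G1_def[symmetric]
      by (intro tendsto_divide) auto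
    then show ?thesis
      by (rule tendsto_cong[THEN iffD1, rotated]) (use ev in \<open>eventually_elim, simp\<close>)
  qed
  have L2: "((\<lambda>r. a2 r / a0 r) \<longlongrightarrow> G2 / G0) (at_right 0)"
  proof -
    have "((\<lambda>r. (a2 r / m r) / (a0 r / m r)) \<longlongrightarrow> G2 / G0) (at_right 0)"
      using lim2 lim0 G0pos unfolding a0_def[symmetric] a2_def[symmetric] m_def[symmetric]
        E_def[symmetric] G0_def[symmetric] G2_def[symmetric]
      by (intro tendsto_divide) auto
    then show ?thesis
      by (rule tendsto_cong[THEN iffD1, rotated]) (use ev in \<open>eventually_elim, simp\<close>)
  qed
  have LV: "((\<lambda>r. a2 r / a0 r - (a1 r / a0 r)^2) \<longlongrightarrow> cond_var f h sstar) (at_right 0)"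
    unfolding cv by (intro tendsto_intros L1 L2)
  show ?thesis
    unfolding uniform_limit_iff
  proof (intro allI impI)
    fix e :: real assume e: "e > 0"
    have "\<forall>\<^sub>F r in at_right 0. dist (a2 r / a0 r - (a1 r / a0 r)^2) (cond_var f h sstar) < e"
      using LV e by (rule tendstoD)
    then show "\<forall>\<^sub>F r in at_right 0. \<forall>n\<in>{1..}. dist (real n * abc_var_Y f A h sstar r n) (cond_var f h sstar) < e"
      using ev by eventually_elim (auto simp: var_eq)
  qed
qed


lemma A_norm_cont:
  fixes A :: "real^'q^'q" and x :: "real^'q"
  shows "continuous_on UNIV (\<lambda>s. A_norm A (s - x))"
proof -
  have c1: "continuous_on UNIV (\<lambda>v::real^'q. v \<bullet> (matrix_inv A *v v))"
    by (intro continuous_intros)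
  have "continuous_on UNIV (\<lambda>s::real^'q. (s - x) \<bullet> (matrix_inv A *v (s - x)))"
    by (rule continuous_on_compose2[OF c1]) (auto intro: continuous_intros)
  then show ?thesis unfolding A_norm_def by (rule continuous_on_real_sqrt)
qed

lemma A_norm_ball_borel:
  fixes A :: "real^'q^'q" and x :: "real^'q"
  shows "{s. A_norm A (s - x) \<le> r} \<in> sets borel"
proof -
  have "closed {s. A_norm A (s - x) \<le> r}"
    by (rule closed_Collect_le[OF A_norm_cont continuous_on_const])
  then show ?thesis by simp
qed

theorem corollary1:
  fixes f :: "real^'q \<Rightarrow> real^'p \<Rightarrow> real"
    and h :: "real^'p \<Rightarrow> real"
    and A :: "real^'q^'q"
  assumes f_meas: "(\<lambda>(t, s). f s t) \<in> borel_measurable (borel :: ((real^'p) \<times> (real^'q)) measure)"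
    and f_nonneg: "\<And>s t. f s t \<ge> 0"
    and f_total: "(\<integral>\<^sup>+ x. ennreal ((\<lambda>(t, s). f s t) x) \<partial>(lborel :: ((real^'p) \<times> (real^'q)) measure)) = 1"
    and h_meas: "h \<in> borel_measurable borel"
    and A_sym: "transpose A = A"
    and A_pd: "\<And>x. x \<noteq> 0 \<Longrightarrow> x \<bullet> (A *v x) > 0"
    and h_sq: "integrable (joint_law f) (\<lambda>(t, s). (h t)\<^sup>2)"
  shows "AE sstar in density lborel (\<lambda>s. ennreal (marg_S f s)).
           uniform_limit {1..}
             (\<lambda>\<delta> n. real n * abc_var_Y f A h sstar \<delta> n)
             (\<lambda>n. cond_var f h sstar)
             (at_right 0)"
proof -
  have Fm: "(\<lambda>x. ennreal ((\<lambda>(t, s). f s t) x)) \<in> borel_measurable (lborel :: ((real^'p) \<times> (real^'q)) measure)"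
    using f_meas by measurable
  have Jprob: "prob_space (joint_law f)"
  proof (rule prob_spaceI)
    have "emeasure (joint_law f) (space (joint_law f))
        = emeasure (density lborel (\<lambda>x. ennreal ((\<lambda>(t, s). f s t) x))) UNIV"
      by (simp add: joint_law_eq)
    also have "\<dots> = (\<integral>\<^sup>+ x. ennreal ((\<lambda>(t, s). f s t) x) * indicator UNIV x \<partial>lborel)"
      using Fm by (rule emeasure_density) simp
    also have "\<dots> = 1" using f_total by simp
    finally show "emeasure (joint_law f) (space (joint_law f)) = 1" .
  qed
  interpret J: prob_space "joint_law f" by (rule Jprob)
  have sJ: "sets (joint_law f) = sets borel" by (simp add: joint_law_def)
  have hfm: "(\<lambda>x. h (fst x)) \<in> borel_measurable (joint_law f)"
    using measurable_compose[OF fst_meas h_meas] measurable_cong_sets[OF sJ refl] by blast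
  have iJ2: "integrable (joint_law f) (\<lambda>x. (h (fst x))^2)"
  proof -
    have eq: "(\<lambda>(t, s). (h t)\<^sup>2) = (\<lambda>x. (h (fst x))^2)" by (auto simp: fun_eq_iff)
    show ?thesis using h_sq unfolding eq .
  qed
  have iJ0: "integrable (joint_law f) (\<lambda>x. 1)" by simp
  have iJ1: "integrable (joint_law f) (\<lambda>x. h (fst x))"
  proof (rule Bochner_Integration.integrable_bound)
    show "integrable (joint_law f) (\<lambda>x. 1 + (h (fst x))^2)" using iJ0 iJ2 by simp
    show "AE x in joint_law f. norm (h (fst x)) \<le> norm (1 + (h (fst x))^2)"
    proof (intro AE_I2)
      fix x
      have "\<bar>a\<bar> \<le> 1 + a^2" for a :: real
      proof (cases "\<bar>a\<bar> \<le> 1")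
        case True then show ?thesis by (simp add: add_increasing2)
      next
        case False
        then have "1 \<le> \<bar>a\<bar>" by simp
        then have "\<bar>a\<bar> * 1 \<le> \<bar>a\<bar> * \<bar>a\<bar>" by (intro mult_left_mono) auto
        moreover have "\<bar>a\<bar> * \<bar>a\<bar> = a * a" by (rule abs_mult_self_eq)
        ultimately show ?thesis unfolding power2_eq_square by linarith
      qed
      then show "norm (h (fst x)) \<le> norm (1 + (h (fst x))^2)" by simp
    qed
  qed (use hfm in simp)
  have w0m: "(\<lambda>t::real^'p. 1::real) \<in> borel_measurable borel" by simp
  have w2m: "(\<lambda>t. (h t)^2) \<in> borel_measurable borel" using h_meas by measurable
  note FB0 = joint_fubini[of f "\<lambda>t. 1", OF f_meas f_nonneg w0m]
  note FB1 = joint_fubini[of f h, OF f_meas f_nonneg h_meas iJ1]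
  note FB2 = joint_fubini[of f "\<lambda>t. (h t)^2", OF f_meas f_nonneg w2m]
  have i0: "integrable lborel (\<lambda>s. \<integral>t. f s t * 1 \<partial>lborel)" using FB0(1) iJ0 by simp
  have i1: "integrable lborel (\<lambda>s. \<integral>t. f s t * h t \<partial>lborel)" using FB1(1) .
  have i2: "integrable lborel (\<lambda>s. \<integral>t. f s t * (h t)^2 \<partial>lborel)" using FB2(1) iJ2 by simp
  obtain c C where c: "c > 0" and Nb: "\<And>v. c * norm v \<le> A_norm A v \<and> A_norm A v \<le> C * norm v"
    using A_norm_bounds[OF A_pd] by blast
  have AEl: "AE s in lborel. LP (\<lambda>s. \<integral>t. f s t * 1 \<partial>lborel) s \<and> LP (\<lambda>s. \<integral>t. f s t * h t \<partial>lborel) s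
      \<and> LP (\<lambda>s. \<integral>t. f s t * (h t)^2 \<partial>lborel) s
      \<and> integrable lborel (\<lambda>t. f s t * 1) \<and> integrable lborel (\<lambda>t. f s t * h t)
      \<and> integrable lborel (\<lambda>t. f s t * (h t)^2)"
    using lebesgue_differentiation[OF i0] lebesgue_differentiation[OF i1] lebesgue_differentiation[OF i2]
      FB0(2)[OF iJ0[unfolded]] FB1(2) FB2(2)[OF iJ2]
    by eventually_elim auto
  have mS: "(\<lambda>s. ennreal (marg_S f s)) \<in> borel_measurable lborel"
  proof -
    have "(\<lambda>s. marg_S f s) \<in> borel_measurable lborel" using i0 by (simp add: marg_S_def[abs_def])
    then show ?thesis by measurable
  qed
  show ?thesis
    unfolding AE_density[OF mS]
    using AEl
  proof eventually_elim
    case (elim sstar)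
    show ?case
    proof
      assume "0 < ennreal (marg_S f sstar)"
      then have pos: "marg_S f sstar > 0" by simp
      show "uniform_limit {1..} (\<lambda>\<delta> n. real n * abc_var_Y f A h sstar \<delta> n) (\<lambda>n. cond_var f h sstar) (at_right 0)"
      proof (rule pointwise[OF Jprob sJ h_meas iJ1 iJ2])
        show "\<And>E. E \<in> sets borel \<Longrightarrow> (\<integral>x. indicator E (snd x) * 1 \<partial>joint_law f)
            = (\<integral>s. indicator E s * (\<integral>t. f s t * 1 \<partial>lborel) \<partial>lborel)"
          using FB0(3) iJ0 by simp
        show "\<And>E. E \<in> sets borel \<Longrightarrow> (\<integral>x. indicator E (snd x) * h (fst x) \<partial>joint_law f)
            = (\<integral>s. indicator E s * (\<integral>t. f s t * h t \<partial>lborel) \<partial>lborel)"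
          using FB1(3) by simp
        show "\<And>E. E \<in> sets borel \<Longrightarrow> (\<integral>x. indicator E (snd x) * (h (fst x))^2 \<partial>joint_law f)
            = (\<integral>s. indicator E s * (\<integral>t. f s t * (h t)^2 \<partial>lborel) \<partial>lborel)"
          using FB2(3) iJ2 by simp
        show "\<And>r. {s. A_norm A (s - sstar) \<le> r} \<in> sets borel" by (rule A_norm_ball_borel)
        show "((\<lambda>r. (\<integral>s. indicator {s. A_norm A (s - sstar) \<le> r} s * (\<integral>t. f s t * 1 \<partial>lborel) \<partial>lborel)
                 / measure lborel {s. A_norm A (s - sstar) \<le> r}) \<longlongrightarrow> (\<integral>t. f sstar t * 1 \<partial>lborel)) (at_right 0)"
          using LP_avg[OF i0 _ c Nb A_norm_ball_borel] elim by simp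
        show "((\<lambda>r. (\<integral>s. indicator {s. A_norm A (s - sstar) \<le> r} s * (\<integral>t. f s t * h t \<partial>lborel) \<partial>lborel)
                 / measure lborel {s. A_norm A (s - sstar) \<le> r}) \<longlongrightarrow> (\<integral>t. f sstar t * h t \<partial>lborel)) (at_right 0)"
          using LP_avg[OF i1 _ c Nb A_norm_ball_borel] elim by simp
        show "((\<lambda>r. (\<integral>s. indicator {s. A_norm A (s - sstar) \<le> r} s * (\<integral>t. f s t * (h t)^2 \<partial>lborel) \<partial>lborel)
                 / measure lborel {s. A_norm A (s - sstar) \<le> r}) \<longlongrightarrow> (\<integral>t. f sstar t * (h t)^2 \<partial>lborel)) (at_right 0)"
          using LP_avg[OF i2 _ c Nb A_norm_ball_borel] elim by simp
        show "integrable lborel (\<lambda>t. f sstar t)" using elim by simp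
        show "integrable lborel (\<lambda>t. f sstar t * h t)" using elim by simp
        show "integrable lborel (\<lambda>t. f sstar t * (h t)^2)" using elim by simp
      qed (use f_nonneg pos in auto)
    qed
  qed
qed

end
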